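(* For all integers $n\ge0$ and $j$ with $0\le 2j\le n$, $$f(n,j)=\sum_{i=0}^{j}p(i)\,p(j-i,\,n-2j).$$ Equivalently, the set of partitions $\lambda$ of $n$ with $a_2+a_4+\dots=j$ is in bijection with the set of ordered pairs of partitions $(\alpha,\beta)$ with $|\alpha|+|\beta|=j$ and $\beta$ having at most $n-2j$ parts; such a bijection is given by $\lambda=(a_1,\dots,a_r)\mapsto(\alpha,\beta)$ with $\alpha=(1^{a_2-a_3}2^{a_4-a_5}3^{a_6-a_7}\cdots)$ and $\beta=(1^{a_3-a_4}2^{a_5-a_6}3^{a_7-a_8}\cdots)$, where $a_i=0$ for $i>r$ and $k^{e}$ denotes $e$ copies of the part $k$.
   Context: A partition $\lambda$ of $n$ is written $n=a_1+\dots+a_r$ with $a_1\ge\dots\ge a_r\ge1$. $f(n,j)$ denotes the number of partitions of $n$ with $a_2+a_4+a_6+\dots=j$. $p(i)$ is the number of partitions of $i$ ($p(0)=1$), and $p(N,k)$ is the number of partitions of $N$ into at most $k$ parts ($p(0,k)=1$ for $k\ge0$). *)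

theory Defs
  imports Main
begin

definition is_partition :: "nat list \<Rightarrow> bool" where
  "is_partition xs \<longleftrightarrow> sorted_wrt (\<ge>) xs \<and> (\<forall>x\<in>set xs. 0 < x)"

definition partitions :: "nat \<Rightarrow> nat list set" where
  "partitions n = {xs. is_partition xs \<and> sum_list xs = n}"

definition p :: "nat \<Rightarrow> nat" where
  "p i = card (partitions i)"

definition p_at_most :: "nat \<Rightarrow> nat \<Rightarrow> nat" where
  "p_at_most N k = card {xs \<in> partitions N. length xs \<le> k}"

definition part_at :: "nat list \<Rightarrow> nat \<Rightarrow> nat" where
  "part_at xs i = (if 1 \<le> i \<and> i \<le> length xs then xs ! (i - 1) else 0)"

definition even_part_sum :: "nat list \<Rightarrow> nat" where
  "even_part_sum xs = (\<Sum>k = 1..length xs. part_at xs (2 * k))"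

definition F :: "nat \<Rightarrow> nat \<Rightarrow> nat list set" where
  "F n j = {xs \<in> partitions n. even_part_sum xs = j}"

definition f :: "nat \<Rightarrow> nat \<Rightarrow> nat" where
  "f n j = card (F n j)"

definition from_mult :: "nat \<Rightarrow> (nat \<Rightarrow> nat) \<Rightarrow> nat list" where
  "from_mult K m = rev (concat (map (\<lambda>k. replicate (m k) k) [1..<K + 1]))"

text \<open>alpha = (1^{a_2-a_3} 2^{a_4-a_5} ...), beta = (1^{a_3-a_4} 2^{a_5-a_6} ...).
  All multiplicities with 2k > r vanish, so K = r suffices.\<close>
definition alpha_of :: "nat list \<Rightarrow> nat list" where
  "alpha_of xs = from_mult (length xs)
     (\<lambda>k. part_at xs (2 * k) - part_at xs (2 * k + 1))"

definition beta_of :: "nat list \<Rightarrow> nat list" where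
  "beta_of xs = from_mult (length xs)
     (\<lambda>k. part_at xs (2 * k + 1) - part_at xs (2 * k + 2))"

definition pair_target :: "nat \<Rightarrow> nat \<Rightarrow> (nat list \<times> nat list) set" where
  "pair_target n j = {(\<alpha>, \<beta>). is_partition \<alpha> \<and> is_partition \<beta> \<and>
      sum_list \<alpha> + sum_list \<beta> = j \<and> length \<beta> \<le> n - 2 * j}"

end

theory Submission
  imports Defs "HOL-Library.Multiset"
begin

lemma part_at_0[simp]: "part_at xs 0 = 0" by (simp add: part_at_def)
lemma part_at_gt: "length xs < i \<Longrightarrow> part_at xs i = 0" by (simp add: part_at_def)

lemma part_at_pos: "is_partition xs \<Longrightarrow> 1 \<le> i \<Longrightarrow> i \<le> length xs \<Longrightarrow> 0 < part_at xs i"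
  unfolding part_at_def is_partition_def by auto

lemma part_at_mono: assumes "is_partition xs" "1 \<le> i" "i \<le> i'"
  shows "part_at xs i' \<le> part_at xs i"
proof (cases "i' \<le> length xs")
  case False then show ?thesis by (simp add: part_at_gt)
next
  case True
  show ?thesis
  proof (cases "i = i'")
    case False
    then have "i - 1 < i' - 1" using assms by auto
    then have "xs ! (i - 1) \<ge> xs ! (i' - 1)" using assms(1) True
      unfolding is_partition_def sorted_wrt_iff_nth_less by auto
    then show ?thesis using True assms unfolding part_at_def by auto
  qed simp
qed

lemma part_at_Suc: "is_partition xs \<Longrightarrow> 1 \<le> i \<Longrightarrow> part_at xs (Suc i) \<le> part_at xs i"
  using part_at_mono by auto

lemma part_eq: assumes "is_partition xs" "is_partition ys" "\<And>i. 1 \<le> i \<Longrightarrow> part_at xs i = part_at ys i"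
  shows "xs = ys"
proof -
  have "\<not> length xs < length ys"
  proof
    assume h: "length xs < length ys"
    then have "0 < part_at ys (length ys)" using part_at_pos[OF assms(2)] by simp
    moreover have "part_at xs (length ys) = 0" using h part_at_gt by simp
    ultimately show False using assms(3)[of "length ys"] h by simp
  qed
  moreover have "\<not> length ys < length xs"
  proof
    assume h: "length ys < length xs"
    then have "0 < part_at xs (length xs)" using part_at_pos[OF assms(1)] by simp
    moreover have "part_at ys (length xs) = 0" using h part_at_gt by simp
    ultimately show False using assms(3)[of "length xs"] h by simp
  qed
  ultimately have L: "length xs = length ys" by simp
  show ?thesis
  proof (rule nth_equalityI[OF L])
    fix i assume "i < length xs"
    then show "xs ! i = ys ! i" using assms(3)[of "Suc i"] L unfolding part_at_def by simp
  qed
qed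

lemma sorted_desc_eq: "sorted_wrt (\<ge>) xs \<Longrightarrow> sorted_wrt (\<ge>) ys \<Longrightarrow> mset xs = mset ys \<Longrightarrow> xs = (ys::nat list)"
proof -
  assume a: "sorted_wrt (\<ge>) xs" "sorted_wrt (\<ge>) ys" "mset xs = mset ys"
  have "sorted (rev xs)" "sorted (rev ys)" using a by (simp_all add: sorted_wrt_rev)
  then have "sort (rev ys) = rev xs" "sort (rev ys) = rev ys"
    using a(3) by (auto intro!: properties_for_sort)
  then show ?thesis by simp
qed

lemma abel1: assumes A: "\<And>i. 1 \<le> i \<Longrightarrow> a (Suc i) \<le> (a i :: nat)"
  shows "(\<Sum>i=1..M. i * (a i - a (Suc i))) + M * a (Suc M) = (\<Sum>i=1..M. a i)"
proof (induction M)
  case (Suc M)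
  obtain e where e: "a (Suc M) = a (Suc (Suc M)) + e" using A[of "Suc M"] le_Suc_ex by auto
  show ?case using Suc by (simp add: e algebra_simps)
qed simp

lemma abel2: assumes A: "\<And>i. 1 \<le> i \<Longrightarrow> a (Suc i) \<le> (a i :: nat)"
  shows "(\<Sum>k=1..M. k * (a (2*k) - a (2*k+2))) + M * a (2*M+2) = (\<Sum>k=1..M. a (2*k))"
proof -
  have B: "a (2 * Suc i) \<le> a (2*i)" if "1 \<le> i" for i
  proof -
    have "a (Suc (Suc (2*i))) \<le> a (Suc (2*i))" "a (Suc (2*i)) \<le> a (2*i)" using A that by auto
    then show ?thesis by simp
  qed
  have "(\<Sum>k=1..M. k * (a (2*k) - a (2*Suc k))) + M * a (2*Suc M) = (\<Sum>k=1..M. a (2*k))"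
    using abel1[of "\<lambda>k. a (2*k)" M] B by simp
  then show ?thesis by simp
qed

lemma tele: assumes A: "\<And>i. 1 \<le> i \<Longrightarrow> a (Suc i) \<le> (a i :: nat)" and "1 \<le> i"
  shows "(\<Sum>l=i..<i+t. a l - a (Suc l)) + a (i+t) = a i"
proof (induction t)
  case (Suc t)
  have "a (Suc (i+t)) \<le> a (i+t)" using A assms(2) by simp
  then show ?case using Suc by simp
qed simp

lemma split_sum: "(\<Sum>i=1..2*(M::nat)+1. (h i :: nat)) = h 1 + (\<Sum>k=1..M. h (2*k) + h (2*k+1))"
proof (induction M)
  case (Suc M)
  have "{1..2*Suc M+1} = insert (2*M+3) (insert (2*M+2) {1..2*M+1})" by auto
  then have "(\<Sum>i=1..2*Suc M+1. h i) = h (2*M+3) + h (2*M+2) + (\<Sum>i=1..2*M+1. h i)" by simp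
  then show ?case using Suc by (simp add: algebra_simps)
qed simp

lemma sum_list_count: "set (xs::nat list) \<subseteq> {1..M} \<Longrightarrow> sum_list xs = (\<Sum>k=1..M. k * count (mset xs) k)"
proof (induction xs)
  case (Cons x xs)
  have "(\<Sum>k=1..M. k * count (mset (x#xs)) k) = (\<Sum>k=1..M. k * count (mset xs) k + (if k = x then k else 0))"
    by (rule sum.cong) auto
  also have "\<dots> = (\<Sum>k=1..M. k * count (mset xs) k) + x" using Cons.prems by (simp add: sum.distrib sum.delta sum.delta')
  finally show ?case using Cons by simp
qed simp

lemma length_count: "set (xs::nat list) \<subseteq> {1..M} \<Longrightarrow> length xs = (\<Sum>k=1..M. count (mset xs) k)"
proof (induction xs)
  case (Cons x xs)
  have "(\<Sum>k=1..M. count (mset (x#xs)) k) = (\<Sum>k=1..M. count (mset xs) k + (if k = x then 1 else 0))"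
    by (rule sum.cong) auto
  also have "\<dots> = (\<Sum>k=1..M. count (mset xs) k) + (\<Sum>k=1..M. (if k = x then 1 else 0::nat))"
    by (simp add: sum.distrib)
  also have "(\<Sum>k=1..M. (if k = x then 1 else 0::nat)) = 1" using Cons.prems
    by (subst sum.delta) auto
  finally show ?case using Cons by simp
qed simp

lemma fm_count_aux: "count (mset (concat (map (\<lambda>k. replicate (m k) k) [1..<K+1]))) x = (if 1 \<le> x \<and> x \<le> K then m x else 0)"
  by (induction K) auto

lemma fm_count: "count (mset (from_mult K m)) x = (if 1 \<le> x \<and> x \<le> K then m x else 0)"
  unfolding from_mult_def using fm_count_aux by simp

lemma fm_set: "set (from_mult K m) \<subseteq> {1..K}"
  unfolding from_mult_def by auto

lemma fm_sorted_aux: "sorted (concat (map (\<lambda>k. replicate (m k) k) [1..<K+1]))"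
  by (induction K) (auto simp: sorted_append)

lemma fm_part: "is_partition (from_mult K m)"
  unfolding is_partition_def using fm_sorted_aux fm_set
  by (auto simp: from_mult_def sorted_wrt_rev)


definition dd :: "nat list \<Rightarrow> nat \<Rightarrow> nat" where
  "dd xs l = part_at xs l - part_at xs (Suc l)"

lemma sum_list_part: "length xs \<le> M \<Longrightarrow> sum_list xs = (\<Sum>i=1..M. part_at xs i)"
proof -
  assume l: "length xs \<le> M"
  have "(\<Sum>i=1..M. part_at xs i) = (\<Sum>i=1..length xs. part_at xs i)"
    by (rule sum.mono_neutral_right) (use l in \<open>auto simp: part_at_gt\<close>)
  also have "\<dots> = (\<Sum>i=Suc 0..<Suc (length xs). part_at xs i)" by (simp add: atLeastLessThanSuc_atLeastAtMost)
  also have "\<dots> = (\<Sum>i=0..<length xs. part_at xs (Suc i))" by (rule sum.shift_bounds_Suc_ivl)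
  also have "\<dots> = (\<Sum>i=0..<length xs. xs ! i)" by (rule sum.cong) (auto simp: part_at_def)
  finally show ?thesis by (simp add: sum_list_sum_nth)
qed

lemma eps_M: "length xs \<le> M \<Longrightarrow> even_part_sum xs = (\<Sum>k=1..M. part_at xs (2*k))"
  unfolding even_part_sum_def by (rule sum.mono_neutral_left) (auto simp: part_at_gt)

lemma F1: assumes p: "is_partition xs" and l: "length xs \<le> 2*M+1"
  shows "sum_list xs = dd xs 1 + (\<Sum>k=1..M. 2*k*dd xs (2*k) + (2*k+1)*dd xs (2*k+1))"
proof -
  have "sum_list xs = (\<Sum>i=1..2*M+1. part_at xs i)" by (rule sum_list_part[OF l])
  also have "\<dots> = (\<Sum>i=1..2*M+1. i * dd xs i)"
    using abel1[of "part_at xs" "2*M+1"] part_at_Suc[OF p] part_at_gt[of xs "Suc(2*M+1)"] l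
    by (simp add: dd_def)
  also have "\<dots> = dd xs 1 + (\<Sum>k=1..M. 2*k*dd xs (2*k) + (2*k+1)*dd xs (2*k+1))"
    unfolding split_sum by simp
  finally show ?thesis .
qed

lemma F2: assumes p: "is_partition xs" and l: "length xs \<le> M"
  shows "even_part_sum xs = (\<Sum>k=1..M. k*(dd xs (2*k) + dd xs (2*k+1)))"
proof -
  have "even_part_sum xs = (\<Sum>k=1..M. part_at xs (2*k))" by (rule eps_M[OF l])
  also have "\<dots> = (\<Sum>k=1..M. k * (part_at xs (2*k) - part_at xs (2*k+2)))"
    using abel2[of "part_at xs" M] part_at_Suc[OF p] part_at_gt[of xs "2*M+2"] l by simp
  also have "\<dots> = (\<Sum>k=1..M. k*(dd xs (2*k) + dd xs (2*k+1)))"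
  proof (rule sum.cong)
    fix k assume "k \<in> {1..M}"
    then have k1: "1 \<le> k" by simp
    have "part_at xs (Suc (Suc (2*k))) \<le> part_at xs (Suc (2*k))" "part_at xs (Suc (2*k)) \<le> part_at xs (2*k)"
      using part_at_Suc[OF p, of "2*k"] part_at_Suc[OF p, of "Suc (2*k)"] k1 by auto
    then show "k * (part_at xs (2*k) - part_at xs (2*k+2)) = k*(dd xs (2*k) + dd xs (2*k+1))"
      by (simp add: dd_def)
  qed simp
  finally show ?thesis .
qed

lemma alpha_count: "count (mset (alpha_of xs)) k = dd xs (2*k)"
  unfolding alpha_of_def fm_count dd_def by (cases "k = 0") (auto simp: part_at_gt)

lemma beta_count: "count (mset (beta_of xs)) k = (if k = 0 then 0 else dd xs (2*k+1))"
  unfolding beta_of_def fm_count dd_def by (auto simp: part_at_gt)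

lemma G: assumes p: "is_partition xs"
  shows "sum_list (alpha_of xs) + sum_list (beta_of xs) = even_part_sum xs"
    and "sum_list xs = dd xs 1 + 2*even_part_sum xs + length (beta_of xs)"
proof -
  define r where "r = length xs"
  have sa: "sum_list (alpha_of xs) = (\<Sum>k=1..r. k * dd xs (2*k))"
    using sum_list_count[of "alpha_of xs" r] fm_set unfolding alpha_count by (simp add: alpha_of_def r_def)
  have "sum_list (beta_of xs) = (\<Sum>k=1..r. k * count (mset (beta_of xs)) k)"
    using sum_list_count[of "beta_of xs" r] fm_set by (simp add: beta_of_def r_def)
  also have "\<dots> = (\<Sum>k=1..r. k * dd xs (2*k+1))" by (rule sum.cong) (auto simp: beta_count)
  finally have sb: "sum_list (beta_of xs) = (\<Sum>k=1..r. k * dd xs (2*k+1))" .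
  have "length (beta_of xs) = (\<Sum>k=1..r. count (mset (beta_of xs)) k)"
    using length_count[of "beta_of xs" r] fm_set by (simp add: beta_of_def r_def)
  also have "\<dots> = (\<Sum>k=1..r. dd xs (2*k+1))" by (rule sum.cong) (auto simp: beta_count)
  finally have lb: "length (beta_of xs) = (\<Sum>k=1..r. dd xs (2*k+1))" .
  have e: "even_part_sum xs = (\<Sum>k=1..r. k*(dd xs (2*k) + dd xs (2*k+1)))"
    using F2[OF p] r_def by simp
  have s: "sum_list xs = dd xs 1 + (\<Sum>k=1..r. 2*k*dd xs (2*k) + (2*k+1)*dd xs (2*k+1))"
    using F1[OF p] r_def by simp
  show "sum_list (alpha_of xs) + sum_list (beta_of xs) = even_part_sum xs"
    unfolding sa sb e by (simp add: sum.distrib[symmetric] algebra_simps)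
  have "(\<Sum>k=1..r. 2*k*dd xs (2*k) + (2*k+1)*dd xs (2*k+1))
      = 2 * (\<Sum>k=1..r. k*(dd xs (2*k) + dd xs (2*k+1))) + (\<Sum>k=1..r. dd xs (2*k+1))"
    by (simp add: sum_distrib_left sum.distrib[symmetric] algebra_simps)
  then show "sum_list xs = dd xs 1 + 2*even_part_sum xs + length (beta_of xs)"
    unfolding s e lb by simp
qed


lemma list_of:
  fixes a :: "nat \<Rightarrow> nat"
  assumes a0: "a 0 = 0" and A: "\<And>i. 1 \<le> i \<Longrightarrow> a (Suc i) \<le> a i" and Z: "\<And>i. N \<le> i \<Longrightarrow> a i = 0"
  shows "\<exists>xs. is_partition xs \<and> part_at xs = a \<and> length xs \<le> N"
proof -
  define r where "r = (LEAST i. a (Suc i) = 0)"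
  have ex: "a (Suc N) = 0" using Z by simp
  have r1: "a (Suc r) = 0" unfolding r_def by (rule LeastI[of _ N]) (rule ex)
  have rN: "r \<le> N" unfolding r_def by (rule Least_le) (rule ex)
  have r2: "a (Suc i) \<noteq> 0" if "i < r" for i using not_less_Least[OF that[unfolded r_def]] by simp
  have mono: "a i' \<le> a i" if "1 \<le> i" "i \<le> i'" for i i'
    using that(2)
  proof (induction i' rule: dec_induct)
    case (step m)
    then show ?case using A[of m] that(1) by simp
  qed simp
  have r3: "a i = 0" if "r < i" for i using mono[of "Suc r" i] that r1 by simp
  define xs where "xs = map (\<lambda>i. a (Suc i)) [0..<r]"
  have "sorted_wrt (\<ge>) xs" unfolding xs_def sorted_wrt_iff_nth_less
    using mono by auto
  moreover have "\<forall>x\<in>set xs. 0 < x" unfolding xs_def using r2 by auto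
  moreover have "part_at xs = a"
  proof
    fix i show "part_at xs i = a i"
      using r3[of i] a0 by (cases "i = 0") (auto simp: part_at_def xs_def)
  qed
  ultimately have "is_partition xs \<and> part_at xs = a \<and> length xs \<le> N"
    using rN unfolding is_partition_def by (simp add: xs_def)
  then show ?thesis by blast
qed

lemma fwd: assumes "xs \<in> F n j" shows "(alpha_of xs, beta_of xs) \<in> pair_target n j"
proof -
  have p: "is_partition xs" and s: "sum_list xs = n" and e: "even_part_sum xs = j"
    using assms by (auto simp: F_def partitions_def)
  show ?thesis unfolding pair_target_def using G[OF p] s e fm_part
    by (auto simp: alpha_of_def beta_of_def)
qed

lemma inj: assumes x: "xs \<in> F n j" and y: "ys \<in> F n j"
  and ab: "alpha_of xs = alpha_of ys" "beta_of xs = beta_of ys"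
  shows "xs = ys"
proof -
  have px: "is_partition xs" and sx: "sum_list xs = n" and ex: "even_part_sum xs = j"
    using x by (auto simp: F_def partitions_def)
  have py: "is_partition ys" and sy: "sum_list ys = n" and ey: "even_part_sum ys = j"
    using y by (auto simp: F_def partitions_def)
  have c2: "dd xs (2*k) = dd ys (2*k)" for k using alpha_count[of xs k] alpha_count[of ys k] ab by simp
  have c3: "dd xs (2*k+1) = dd ys (2*k+1)" if "k \<noteq> 0" for k
    using beta_count[of xs k] beta_count[of ys k] ab that by simp
  have c1: "dd xs 1 = dd ys 1" using G(2)[OF px] G(2)[OF py] sx sy ex ey ab by simp
  have call: "dd xs l = dd ys l" if "1 \<le> l" for l
  proof (cases "even l")
    case True then obtain k where "l = 2*k" by blast
    then show ?thesis using c2 by simp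
  next
    case False then obtain k where k: "l = 2*k+1" using oddE by blast
    show ?thesis
    proof (cases "k = 0")
      case True then show ?thesis using k c1 by simp
    next
      case False then show ?thesis using k c3 by simp
    qed
  qed
  show ?thesis
  proof (rule part_eq[OF px py])
    fix i :: nat assume i: "1 \<le> i"
    define t where "t = length xs + length ys + 1"
    have "(\<Sum>l=i..<i+t. dd xs l) + part_at xs (i+t) = part_at xs i"
      using tele[of "part_at xs" i t] part_at_Suc[OF px] i unfolding dd_def by simp
    moreover have "(\<Sum>l=i..<i+t. dd ys l) + part_at ys (i+t) = part_at ys i"
      using tele[of "part_at ys" i t] part_at_Suc[OF py] i unfolding dd_def by simp
    moreover have "part_at xs (i+t) = 0" "part_at ys (i+t) = 0" using part_at_gt t_def by auto
    moreover have "(\<Sum>l=i..<i+t. dd xs l) = (\<Sum>l=i..<i+t. dd ys l)"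
      by (rule sum.cong) (use i call in auto)
    ultimately show "part_at xs i = part_at ys i" by simp
  qed
qed


lemma surj: assumes nj: "2*j \<le> n" and t: "(\<alpha>, \<beta>) \<in> pair_target n j"
  shows "\<exists>xs\<in>F n j. alpha_of xs = \<alpha> \<and> beta_of xs = \<beta>"
proof -
  have p\<alpha>: "is_partition \<alpha>" and p\<beta>: "is_partition \<beta>" and s: "sum_list \<alpha> + sum_list \<beta> = j"
    and l\<beta>: "length \<beta> \<le> n - 2*j" using t by (auto simp: pair_target_def)
  define c where "c = n - 2*j - length \<beta>"
  define d where "d l = (if l = 0 then 0 else if l = 1 then c else if even l then count (mset \<alpha>) (l div 2)
     else count (mset \<beta>) (l div 2))" for l
  define N where "N = 2*j+2"
  have b\<alpha>: "count (mset \<alpha>) k = 0" if "j < k" for k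
    using member_le_sum_list[of k \<alpha>] s that by (auto simp: count_eq_zero_iff)
  have b\<beta>: "count (mset \<beta>) k = 0" if "j < k" for k
    using member_le_sum_list[of k \<beta>] s that by (auto simp: count_eq_zero_iff)
  have b0: "count (mset \<alpha>) 0 = 0" "count (mset \<beta>) 0 = 0"
    using p\<alpha> p\<beta> by (auto simp: is_partition_def count_eq_zero_iff)
  have dz: "d l = 0" if "N \<le> l" for l
  proof -
    have "j < l div 2" using that N_def by auto
    then show ?thesis using that N_def b\<alpha> b\<beta> by (auto simp: d_def)
  qed
  define a where "a i = (if i = 0 then 0 else \<Sum>l=i..<N. d l)" for i
  have A: "a (Suc i) \<le> a i" if "1 \<le> i" for i
    using that by (auto simp: a_def intro!: sum_mono2)
  have Z: "a i = 0" if "N \<le> i" for i using that by (simp add: a_def)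
  have ad: "a i - a (Suc i) = d i" if "1 \<le> i" for i
  proof (cases "i < N")
    case True then show ?thesis using that by (simp add: a_def sum.atLeast_Suc_lessThan)
  next
    case False then show ?thesis using that Z dz by simp
  qed
  obtain xs where px: "is_partition xs" and pa: "part_at xs = a" and lx: "length xs \<le> N"
    using list_of[of a N] A Z by (auto simp: a_def)
  have ddx: "dd xs l = d l" if "1 \<le> l" for l using ad[OF that] pa by (simp add: dd_def)
  have al: "alpha_of xs = \<alpha>"
  proof (rule sorted_desc_eq)
    show "sorted_wrt (\<ge>) (alpha_of xs)" using fm_part by (simp add: alpha_of_def is_partition_def)
    show "sorted_wrt (\<ge>) \<alpha>" using p\<alpha> by (simp add: is_partition_def)
    show "mset (alpha_of xs) = mset \<alpha>"
    proof (rule multiset_eqI)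
      fix k show "count (mset (alpha_of xs)) k = count (mset \<alpha>) k"
      proof (cases "k = 0")
        case True then show ?thesis using b0 by (simp add: alpha_count dd_def)
      next
        case False then show ?thesis using ddx[of "2*k"] by (simp add: alpha_count d_def)
      qed
    qed
  qed
  have be: "beta_of xs = \<beta>"
  proof (rule sorted_desc_eq)
    show "sorted_wrt (\<ge>) (beta_of xs)" using fm_part by (simp add: beta_of_def is_partition_def)
    show "sorted_wrt (\<ge>) \<beta>" using p\<beta> by (simp add: is_partition_def)
    show "mset (beta_of xs) = mset \<beta>"
    proof (rule multiset_eqI)
      fix k show "count (mset (beta_of xs)) k = count (mset \<beta>) k"
      proof (cases "k = 0")
        case True then show ?thesis using b0 by (simp add: beta_count)
      next
        case False then show ?thesis using ddx[of "2*k+1"] by (simp add: beta_count d_def)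
      qed
    qed
  qed
  have ev: "even_part_sum xs = j" using G(1)[OF px] al be s by simp
  have sm: "sum_list xs = n" using G(2)[OF px] ev be ddx[of 1] l\<beta> nj by (simp add: d_def c_def)
  show ?thesis using px ev sm al be by (auto simp: F_def partitions_def)
qed

lemma len_le_sum: "\<forall>x\<in>set xs. 0 < (x::nat) \<Longrightarrow> length xs \<le> sum_list xs"
  by (induction xs) auto

lemma fin_part: "finite (partitions i)"
proof (rule finite_subset)
  show "partitions i \<subseteq> {xs. set xs \<subseteq> {0..i} \<and> length xs \<le> i}"
    using len_le_sum member_le_sum_list by (fastforce simp: partitions_def is_partition_def)
  show "finite {xs. set xs \<subseteq> {0..i} \<and> length xs \<le> i}" by (rule finite_lists_length_le) simp
qed

theorem mainTheorem2:
  fixes n j :: nat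
  assumes "2 * j \<le> n"
  shows "f n j = (\<Sum>i = 0..j. p i * p_at_most (j - i) (n - 2 * j))
     \<and> bij_betw (\<lambda>xs. (alpha_of xs, beta_of xs)) (F n j) (pair_target n j)"
proof -
  have bij: "bij_betw (\<lambda>xs. (alpha_of xs, beta_of xs)) (F n j) (pair_target n j)"
    unfolding bij_betw_def
  proof
    show "inj_on (\<lambda>xs. (alpha_of xs, beta_of xs)) (F n j)"
      by (rule inj_onI) (use inj in auto)
    show "(\<lambda>xs. (alpha_of xs, beta_of xs)) ` F n j = pair_target n j"
    proof
      show "(\<lambda>xs. (alpha_of xs, beta_of xs)) ` F n j \<subseteq> pair_target n j" using fwd by auto
      show "pair_target n j \<subseteq> (\<lambda>xs. (alpha_of xs, beta_of xs)) ` F n j"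
      proof
        fix x assume "x \<in> pair_target n j"
        then obtain \<alpha> \<beta> where x: "x = (\<alpha>, \<beta>)" "(\<alpha>, \<beta>) \<in> pair_target n j" by (cases x) auto
        then obtain xs where "xs \<in> F n j" "alpha_of xs = \<alpha>" "beta_of xs = \<beta>" using surj[OF assms] by blast
        then show "x \<in> (\<lambda>xs. (alpha_of xs, beta_of xs)) ` F n j" using x by force
      qed
    qed
  qed
  define B where "B i = {b \<in> partitions (j - i). length b \<le> n - 2*j}" for i
  have T: "pair_target n j = (\<Union>i\<in>{0..j}. partitions i \<times> B i)"
  proof
    show "pair_target n j \<subseteq> (\<Union>i\<in>{0..j}. partitions i \<times> B i)"
    proof
      fix x assume "x \<in> pair_target n j"
      then obtain \<alpha> \<beta> where x: "x = (\<alpha>, \<beta>)" "(\<alpha>, \<beta>) \<in> pair_target n j" by (cases x) auto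
      then have "\<alpha> \<in> partitions (sum_list \<alpha>)" "\<beta> \<in> B (sum_list \<alpha>)" "sum_list \<alpha> \<in> {0..j}"
        by (auto simp: pair_target_def partitions_def B_def)
      then show "x \<in> (\<Union>i\<in>{0..j}. partitions i \<times> B i)" using x by blast
    qed
    show "(\<Union>i\<in>{0..j}. partitions i \<times> B i) \<subseteq> pair_target n j"
      by (auto simp: pair_target_def partitions_def B_def)
  qed
  have "card (pair_target n j) = (\<Sum>i\<in>{0..j}. card (partitions i \<times> B i))"
    unfolding T
  proof (rule card_UN_disjoint)
    show "finite {0..j}" by simp
    show "\<forall>i\<in>{0..j}. finite (partitions i \<times> B i)" using fin_part by (auto simp: B_def)
    show "\<forall>i\<in>{0..j}. \<forall>k\<in>{0..j}. i \<noteq> k \<longrightarrow> partitions i \<times> B i \<inter> partitions k \<times> B k = {}"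
      by (auto simp: partitions_def)
  qed
  also have "\<dots> = (\<Sum>i = 0..j. p i * p_at_most (j - i) (n - 2 * j))"
    by (rule sum.cong) (auto simp: card_cartesian_product p_def p_at_most_def B_def)
  finally show ?thesis using bij bij_betw_same_card[OF bij] by (simp add: f_def)
qed

end
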